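(* Let $K$ be a compactum and $U_1,U_2\subset K$ disjoint open sets such that $K\setminus(U_1\cup U_2)$ has at most finitely many components intersecting both $\partial U_1$ and $\partial U_2$, say $n$ of them. Then for any open sets $W_1\subset U_1$ and $W_2\subset U_2$, the set $K\setminus(W_1\cup W_2)$ has at most $n$ components intersecting both $\partial W_1$ and $\partial W_2$.
   Context: A compactum is a compact metric space; boundaries are taken relative to $K$. *)

theory Defs
  imports "HOL-Analysis.Analysis"
begin

definition bridging_components :: "'a::metric_space set \<Rightarrow> 'a set \<Rightarrow> 'a set \<Rightarrow> 'a set set" where
  "bridging_components K A B =
     {C \<in> components (K - (A \<union> B)).
        C \<inter> (top_of_set K) frontier_of A \<noteq> {} \<and> C \<inter> (top_of_set K) frontier_of B \<noteq> {}}"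

end

theory Submission
  imports Defs
begin

lemma fr_eq:
  assumes "openin (top_of_set K) U"
  shows "(top_of_set K) frontier_of U = K \<inter> closure U - U"
proof -
  have "U \<subseteq> K" using assms openin_imp_subset by blast
  then show ?thesis
    using assms by (simp add: frontier_of_openin closure_of_subtopology_open)
qed

lemma cl_disj:
  assumes "openin (top_of_set K) U2" "U1 \<inter> U2 = {}" "U1 \<subseteq> K"
  shows "closure U1 \<inter> U2 = {}"
proof -
  obtain V where O: "open V" "U2 = K \<inter> V" using assms(1) openin_open by blast
  have "V \<inter> closure U1 \<subseteq> closure (V \<inter> U1)" using O(1) open_Int_closure_subset by blast
  moreover have "V \<inter> U1 = {}" using assms O by blast
  ultimately show ?thesis using O by auto
qed

lemma key:
  fixes K U1 U2 W1 W2 D :: "'a::metric_space set"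
  assumes K: "compact K"
    and oU1: "openin (top_of_set K) U1" and oU2: "openin (top_of_set K) U2"
    and disj: "U1 \<inter> U2 = {}"
    and oW1: "openin (top_of_set K) W1" and oW2: "openin (top_of_set K) W2"
    and sW1: "W1 \<subseteq> U1" and sW2: "W2 \<subseteq> U2"
    and D: "D \<in> bridging_components K W1 W2"
  shows "\<exists>C \<in> bridging_components K U1 U2. C \<subseteq> D"
proof (rule ccontr)
  assume nC: "\<not> ?thesis"
  define F where "F = K - (U1 \<union> U2)"
  define G where "G = K - (W1 \<union> W2)"
  have U1K: "U1 \<subseteq> K" using oU1 openin_imp_subset by blast
  have U2K: "U2 \<subseteq> K" using oU2 openin_imp_subset by blast
  have Dc: "D \<in> components G"
    and DW1: "D \<inter> (top_of_set K) frontier_of W1 \<noteq> {}"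
    and DW2: "D \<inter> (top_of_set K) frontier_of W2 \<noteq> {}"
    using D by (auto simp: bridging_components_def G_def)
  have cK: "closed K" using K compact_imp_closed by blast
  have "closedin (top_of_set K) G"
    unfolding G_def using oW1 oW2
    by (metis closedin_diff closedin_topspace openin_Un topspace_euclidean_subtopology)
  then have cG: "closed G" using cK closedin_closed_trans by blast
  have "closedin (top_of_set K) F"
    unfolding F_def using oU1 oU2
    by (metis closedin_diff closedin_topspace openin_Un topspace_euclidean_subtopology)
  then have cF: "closed F" using cK closedin_closed_trans by blast
  have cD: "closed D" using closed_components[OF cG Dc] .
  have DG: "D \<subseteq> G" using Dc in_components_subset by blast
  have GK: "G \<subseteq> K" unfolding G_def by blast
  have FG: "F \<subseteq> G" unfolding F_def G_def using sW1 sW2 by blast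
  have kD: "compact D"
  proof -
    have "compact (K \<inter> D)" using K cD compact_Int_closed by blast
    moreover have "K \<inter> D = D" using DG GK by blast
    ultimately show ?thesis by simp
  qed
  define S where "S = D \<inter> F"
  have kS: "compact S" unfolding S_def using kD cF compact_Int_closed by blast
  have cS: "closed S" using kS compact_imp_closed by blast
  define A where "A = S \<inter> closure U1"
  define B where "B = S \<inter> closure U2"
  have fr1: "(top_of_set K) frontier_of U1 = K \<inter> closure U1 - U1" using fr_eq[OF oU1] .
  have fr2: "(top_of_set K) frontier_of U2 = K \<inter> closure U2 - U2" using fr_eq[OF oU2] .
  have sep: "separated_between (top_of_set S) A B"
  proof (rule cut_wire_fence_theorem)
    show "compact_space (top_of_set S)"
      using kS by (simp add: compact_space_subtopology)
    show "Hausdorff_space (top_of_set S)"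
      by (simp add: Hausdorff_space_subtopology)
    show "closedin (top_of_set S) A" unfolding A_def by (simp add: closedin_closed_Int)
    show "closedin (top_of_set S) B" unfolding B_def by (simp add: closedin_closed_Int)
    fix C assume "connectedin (top_of_set S) C"
    then have cC: "connected C" and CS: "C \<subseteq> S" by (auto simp: connectedin_subtopology)
    show "disjnt C A \<or> disjnt C B"
    proof (rule ccontr)
      assume "\<not> (disjnt C A \<or> disjnt C B)"
      then obtain x y where x: "x \<in> C" "x \<in> A" and y: "y \<in> C" "y \<in> B"
        by (auto simp: disjnt_iff)
      define C' where "C' = connected_component_set F x"
      have xF: "x \<in> F" using x CS S_def by blast
      have C'c: "C' \<in> components F" unfolding C'_def components_def using xF by blast
      have CC': "C \<subseteq> C'" unfolding C'_def
        using connected_component_maximal[OF x(1) cC] CS S_def by blast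
      have C'D: "C' \<subseteq> D"
      proof (rule components_maximal[OF Dc])
        show "connected C'" using C'c in_components_connected by blast
        show "C' \<subseteq> G" using C'c in_components_subset FG by blast
        show "D \<inter> C' \<noteq> {}" using x CC' CS S_def by blast
      qed
      have "x \<in> C' \<inter> (top_of_set K) frontier_of U1"
        using x CC' xF unfolding fr1 A_def F_def by blast
      moreover have "y \<in> C' \<inter> (top_of_set K) frontier_of U2"
        using y CC' CS unfolding fr2 B_def S_def F_def by blast
      ultimately have "C' \<in> bridging_components K U1 U2"
        using C'c unfolding bridging_components_def F_def by blast
      with C'D nC show False by blast
    qed
  qed
  then obtain P where cP0: "closedin (top_of_set S) P" and oP0: "openin (top_of_set S) P"
      and AP: "A \<subseteq> P" and BQ: "B \<subseteq> S - P"
    unfolding separated_between by auto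
  define Q where "Q = S - P"
  have cQ0: "closedin (top_of_set S) Q" unfolding Q_def using oP0
    by (metis closedin_diff closedin_topspace topspace_euclidean_subtopology)
  have cP: "closed P" using cP0 cS closedin_closed_trans by blast
  have cQ: "closed Q" using cQ0 cS closedin_closed_trans by blast
  have PS: "P \<subseteq> S" using cP0 closedin_imp_subset by blast
  have cl12: "closure U1 \<inter> U2 = {}" using cl_disj[OF oU2 disj U1K] .
  have cl21: "closure U2 \<inter> U1 = {}" using cl_disj[OF oU1 _ U2K] disj by blast
  define E1 where "E1 = closure (D \<inter> U1) \<union> P"
  define E2 where "E2 = closure (D \<inter> U2) \<union> Q"
  have E1D: "E1 \<inter> D \<subseteq> (D \<inter> U1) \<union> P"
  proof
    fix x assume x: "x \<in> E1 \<inter> D"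
    show "x \<in> (D \<inter> U1) \<union> P"
    proof (cases "x \<in> P")
      case False
      then have "x \<in> closure U1" using x E1_def closure_mono[of "D \<inter> U1" U1] by blast
      moreover have "x \<in> K" using x DG GK by blast
      ultimately show ?thesis using x cl12 AP unfolding A_def S_def F_def by blast
    qed simp
  qed
  have E2D: "E2 \<inter> D \<subseteq> (D \<inter> U2) \<union> Q"
  proof
    fix x assume x: "x \<in> E2 \<inter> D"
    show "x \<in> (D \<inter> U2) \<union> Q"
    proof (cases "x \<in> Q")
      case False
      then have "x \<in> closure U2" using x E2_def closure_mono[of "D \<inter> U2" U2] by blast
      moreover have "x \<in> K" using x DG GK by blast
      ultimately show ?thesis using x cl21 BQ False unfolding B_def S_def F_def Q_def by blast
    qed simp
  qed
  have "E1 \<inter> E2 \<inter> D = {}"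
  proof -
    have "((D \<inter> U1) \<union> P) \<inter> ((D \<inter> U2) \<union> Q) = {}"
      using disj PS unfolding Q_def S_def F_def by blast
    then show ?thesis using E1D E2D by blast
  qed
  moreover have "D \<subseteq> E1 \<union> E2"
  proof
    fix x assume x: "x \<in> D"
    have "x \<in> K" using x DG GK by blast
    then consider "x \<in> U1" | "x \<in> U2" | "x \<in> S" using x unfolding S_def F_def by blast
    then show "x \<in> E1 \<union> E2"
    proof cases
      case 1 then show ?thesis using x closure_subset unfolding E1_def by blast
    next
      case 2 then show ?thesis using x closure_subset unfolding E2_def by blast
    next
      case 3 then show ?thesis unfolding E1_def E2_def Q_def by blast
    qed
  qed
  moreover have "E1 \<inter> D \<noteq> {}"
  proof -
    obtain p where p: "p \<in> D" "p \<in> (top_of_set K) frontier_of W1" using DW1 by blast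
    then have pK: "p \<in> K" and pc: "p \<in> closure U1"
      using fr_eq[OF oW1] closure_mono[OF sW1] by blast+
    show ?thesis
    proof (cases "p \<in> U1")
      case True then show ?thesis using p closure_subset unfolding E1_def by blast
    next
      case False
      then have "p \<in> A" using p pK pc cl12 unfolding A_def S_def F_def by blast
      then show ?thesis using AP p unfolding E1_def by blast
    qed
  qed
  moreover have "E2 \<inter> D \<noteq> {}"
  proof -
    obtain p where p: "p \<in> D" "p \<in> (top_of_set K) frontier_of W2" using DW2 by blast
    then have pK: "p \<in> K" and pc: "p \<in> closure U2"
      using fr_eq[OF oW2] closure_mono[OF sW2] by blast+
    show ?thesis
    proof (cases "p \<in> U2")
      case True then show ?thesis using p closure_subset unfolding E2_def by blast
    next
      case False
      then have "p \<in> B" using p pK pc cl21 unfolding B_def S_def F_def by blast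
      then show ?thesis using BQ p unfolding E2_def Q_def by blast
    qed
  qed
  moreover have "closed E1" "closed E2" unfolding E1_def E2_def using cP cQ by auto
  moreover have "connected D" using Dc in_components_connected by blast
  ultimately show False unfolding connected_closed by blast
qed

theorem lemma4p2:
  fixes K U1 U2 W1 W2 :: "'a::metric_space set" and n :: nat
  assumes "compact K"
    and "openin (top_of_set K) U1" and "openin (top_of_set K) U2"
    and "U1 \<inter> U2 = {}"
    and "finite (bridging_components K U1 U2)"
    and "card (bridging_components K U1 U2) = n"
    and "openin (top_of_set K) W1" and "openin (top_of_set K) W2"
    and "W1 \<subseteq> U1" and "W2 \<subseteq> U2"
  shows "finite (bridging_components K W1 W2) \<and> card (bridging_components K W1 W2) \<le> n"
proof -
  define BW where "BW = bridging_components K W1 W2"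
  define BU where "BU = bridging_components K U1 U2"
  have "\<forall>D\<in>BW. \<exists>C. C \<in> BU \<and> C \<subseteq> D"
    using key[OF assms(1-4) assms(7-10)] unfolding BW_def BU_def by blast
  then obtain f where f: "\<And>D. D \<in> BW \<Longrightarrow> f D \<in> BU \<and> f D \<subseteq> D" by metis
  have inj: "inj_on f BW"
  proof (rule inj_onI)
    fix D1 D2 assume d: "D1 \<in> BW" "D2 \<in> BW" "f D1 = f D2"
    have "f D1 \<noteq> {}" using f[OF d(1)] in_components_nonempty
      unfolding BU_def bridging_components_def by blast
    then have "D1 \<inter> D2 \<noteq> {}" using f d by blast
    moreover have "D1 \<in> components (K - (W1 \<union> W2))" "D2 \<in> components (K - (W1 \<union> W2))"
      using d unfolding BW_def bridging_components_def by auto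
    ultimately show "D1 = D2" using components_nonoverlap by blast
  qed
  have sub: "f ` BW \<subseteq> BU" using f by blast
  have finBU: "finite BU" using assms(5) BU_def by simp
  have "finite (f ` BW)" using finite_subset[OF sub finBU] .
  then have finBW: "finite BW" using finite_imageD inj by blast
  have "card BW = card (f ` BW)" using card_image[OF inj] by simp
  also have "\<dots> \<le> card BU" using card_mono[OF finBU sub] .
  finally show ?thesis using finBW assms(6) BW_def BU_def by simp
qed

end
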